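(* Let $A$ be an associative algebra, $M$ an $A$-bimodule, and let $\{ T_\alpha : M \to A \}_{\alpha \in \Omega}$ and $\{ S_\alpha : M \to A \}_{\alpha \in \Omega}$ be two compatible $\mathcal{O}$-operator families. If the family $\{S_\alpha\}$ is invertible (each $S_\alpha$ is a linear isomorphism), then $\{ N_\alpha = T_{\alpha} \circ S_{\alpha}^{-1} : A \to A \}_{\alpha \in \Omega}$ is a Nijenhuis family on $A$. Likewise, if $\{T_\alpha\}$ is invertible, then $\{ N_\alpha = S_{\alpha} \circ T_{\alpha}^{-1} \}_{\alpha \in \Omega}$ is a Nijenhuis family on $A$.
   Context: $\Omega$ is a semigroup, $\mathbf{k}$ a field of characteristic $0$. An $\mathcal{O}$-operator family is a collection of linear maps $T_\alpha:M\to A$ with $T_\alpha(u) \cdot T_\beta(v) = T_{\alpha\beta}(T_\alpha(u) \cdot v + u \cdot T_\beta(v))$ for all $u,v\in M$, $\alpha,\beta\in\Omega$. Two $\mathcal{O}$-operator families $\{T_\alpha\},\{S_\alpha\}$ are compatible if $\{\lambda T_\alpha+\eta S_\alpha\}_{\alpha}$ is an $\mathcal{O}$-operator family for all $\lambda,\eta\in\mathbf{k}$. A Nijenhuis family is a collection of linear maps $N_\alpha:A\to A$ with $N_\alpha(a) \cdot N_\beta(b) = N_{\alpha \beta} \big( N_\alpha (a) \cdot b + a \cdot N_\beta(b) - N_{\alpha \beta}(a \cdot b) \big)$. *)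

theory Defs
  imports Complex_Main
begin

definition assoc_algebra :: "('k::field \<Rightarrow> 'a::ring \<Rightarrow> 'a) \<Rightarrow> bool" where
  "assoc_algebra sA \<longleftrightarrow> vector_space sA \<and>
     (\<forall>c a b. sA c (a * b) = sA c a * b \<and> sA c (a * b) = a * sA c b)"

definition bimodule ::
  "('k::field \<Rightarrow> 'a::ring \<Rightarrow> 'a) \<Rightarrow> ('k \<Rightarrow> 'm::ab_group_add \<Rightarrow> 'm)
   \<Rightarrow> ('a \<Rightarrow> 'm \<Rightarrow> 'm) \<Rightarrow> ('m \<Rightarrow> 'a \<Rightarrow> 'm) \<Rightarrow> bool" where
  "bimodule sA sM l r \<longleftrightarrow> vector_space sM \<and>
     (\<forall>a b m. l (a + b) m = l a m + l b m) \<and>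
     (\<forall>a m n. l a (m + n) = l a m + l a n) \<and>
     (\<forall>a m b. r m (a + b) = r m a + r m b) \<and>
     (\<forall>a m n. r (m + n) a = r m a + r n a) \<and>
     (\<forall>c a m. l (sA c a) m = sM c (l a m) \<and> l a (sM c m) = sM c (l a m)) \<and>
     (\<forall>c a m. r m (sA c a) = sM c (r m a) \<and> r (sM c m) a = sM c (r m a)) \<and>
     (\<forall>a b m. l (a * b) m = l a (l b m)) \<and>
     (\<forall>a b m. r m (a * b) = r (r m a) b) \<and>
     (\<forall>a b m. l a (r m b) = r (l a m) b)"

definition O_operator_family ::
  "('k::field \<Rightarrow> 'a::ring \<Rightarrow> 'a) \<Rightarrow> ('k \<Rightarrow> 'm::ab_group_add \<Rightarrow> 'm)
   \<Rightarrow> ('a \<Rightarrow> 'm \<Rightarrow> 'm) \<Rightarrow> ('m \<Rightarrow> 'a \<Rightarrow> 'm)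
   \<Rightarrow> ('w::semigroup_mult \<Rightarrow> 'm \<Rightarrow> 'a) \<Rightarrow> bool" where
  "O_operator_family sA sM l r T \<longleftrightarrow>
     (\<forall>\<alpha>. Vector_Spaces.linear sM sA (T \<alpha>)) \<and>
     (\<forall>u v \<alpha> \<beta>. T \<alpha> u * T \<beta> v = T (\<alpha> * \<beta>) (l (T \<alpha> u) v + r u (T \<beta> v)))"

definition compatible_O_operator_families ::
  "('k::field \<Rightarrow> 'a::ring \<Rightarrow> 'a) \<Rightarrow> ('k \<Rightarrow> 'm::ab_group_add \<Rightarrow> 'm)
   \<Rightarrow> ('a \<Rightarrow> 'm \<Rightarrow> 'm) \<Rightarrow> ('m \<Rightarrow> 'a \<Rightarrow> 'm)
   \<Rightarrow> ('w::semigroup_mult \<Rightarrow> 'm \<Rightarrow> 'a) \<Rightarrow> ('w \<Rightarrow> 'm \<Rightarrow> 'a) \<Rightarrow> bool" where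
  "compatible_O_operator_families sA sM l r T S \<longleftrightarrow>
     O_operator_family sA sM l r T \<and> O_operator_family sA sM l r S \<and>
     (\<forall>c d. O_operator_family sA sM l r (\<lambda>\<alpha> u. sA c (T \<alpha> u) + sA d (S \<alpha> u)))"

definition Nijenhuis_family ::
  "('k::field \<Rightarrow> 'a::ring \<Rightarrow> 'a) \<Rightarrow> ('w::semigroup_mult \<Rightarrow> 'a \<Rightarrow> 'a) \<Rightarrow> bool" where
  "Nijenhuis_family sA N \<longleftrightarrow>
     (\<forall>\<alpha>. Vector_Spaces.linear sA sA (N \<alpha>)) \<and>
     (\<forall>a b \<alpha> \<beta>. N \<alpha> a * N \<beta> b =
        N (\<alpha> * \<beta>) (N \<alpha> a * b + a * N \<beta> b - N (\<alpha> * \<beta>) (a * b)))"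

end

theory Submission
  imports Defs
begin

lemma inv_linear_aux:
  assumes lin: "Vector_Spaces.linear s1 s2 f" and b: "bij f"
  shows "Vector_Spaces.linear s2 s1 (inv f)"
proof -
  have L: "vector_space s1" "vector_space s2" "\<And>x y. f (x + y) = f x + f y"
    "\<And>c x. f (s1 c x) = s2 c (f x)" using lin unfolding Vector_Spaces.linear_iff by auto
  have fi: "\<And>y. f (inv f y) = y" using b by (simp add: bij_is_surj surj_f_inv_f)
  have if_: "\<And>x. inv f (f x) = x" using b by (simp add: bij_is_inj)
  have "inv f (x + y) = inv f x + inv f y" for x y
    by (metis L(3) fi if_)
  moreover have "inv f (s2 c x) = s1 c (inv f x)" for c x
    by (metis L(4) fi if_)
  ultimately show ?thesis using L(1,2) unfolding Vector_Spaces.linear_iff by auto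
qed

lemma main_aux:
  fixes sA :: "'k::field \<Rightarrow> 'a::ring \<Rightarrow> 'a"
    and sM :: "'k \<Rightarrow> 'm::ab_group_add \<Rightarrow> 'm"
    and l :: "'a \<Rightarrow> 'm \<Rightarrow> 'm" and r :: "'m \<Rightarrow> 'a \<Rightarrow> 'm"
    and T S :: "'w::semigroup_mult \<Rightarrow> 'm \<Rightarrow> 'a"
  assumes bm: "bimodule sA sM l r"
    and c: "compatible_O_operator_families sA sM l r T S"
    and bS: "\<forall>\<alpha>. bij (S \<alpha>)"
  shows "Nijenhuis_family sA (\<lambda>\<alpha>. T \<alpha> \<circ> inv (S \<alpha>))"
proof -
  have OT: "O_operator_family sA sM l r T" and OS: "O_operator_family sA sM l r S"
    and OTS: "O_operator_family sA sM l r (\<lambda>\<alpha> u. sA 1 (T \<alpha> u) + sA 1 (S \<alpha> u))"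
    using c unfolding compatible_O_operator_families_def by auto
  have linT: "\<And>\<alpha>. Vector_Spaces.linear sM sA (T \<alpha>)" and
       linS: "\<And>\<alpha>. Vector_Spaces.linear sM sA (S \<alpha>)" using OT OS
    unfolding O_operator_family_def by auto
  have vsA: "vector_space sA" using linT[of undefined] unfolding Vector_Spaces.linear_iff by auto
  have one: "\<And>x. sA 1 x = x" using vsA by (simp add: vector_space_def)
  have Tadd: "\<And>\<alpha> x y. T \<alpha> (x + y) = T \<alpha> x + T \<alpha> y"
    using linT unfolding Vector_Spaces.linear_iff by auto
  have Sadd: "\<And>\<alpha> x y. S \<alpha> (x + y) = S \<alpha> x + S \<alpha> y"
    using linS unfolding Vector_Spaces.linear_iff by auto
  have ladd: "\<And>a b m. l (a + b) m = l a m + l b m"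
    and radd: "\<And>a m b. r m (a + b) = r m a + r m b"
    using bm unfolding bimodule_def by auto
  have Teq: "\<And>u v \<alpha> \<beta>. T \<alpha> u * T \<beta> v = T (\<alpha> * \<beta>) (l (T \<alpha> u) v + r u (T \<beta> v))"
    using OT unfolding O_operator_family_def by auto
  have Seq: "\<And>u v \<alpha> \<beta>. S \<alpha> u * S \<beta> v = S (\<alpha> * \<beta>) (l (S \<alpha> u) v + r u (S \<beta> v))"
    using OS unfolding O_operator_family_def by auto
  have TSeq: "\<And>u v \<alpha> \<beta>. (T \<alpha> u + S \<alpha> u) * (T \<beta> v + S \<beta> v) =
     T (\<alpha> * \<beta>) (l (T \<alpha> u + S \<alpha> u) v + r u (T \<beta> v + S \<beta> v)) +
     S (\<alpha> * \<beta>) (l (T \<alpha> u + S \<alpha> u) v + r u (T \<beta> v + S \<beta> v))"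
    using OTS unfolding O_operator_family_def one by auto
  have cross: "T \<alpha> u * S \<beta> v + S \<alpha> u * T \<beta> v =
      T (\<alpha> * \<beta>) (l (S \<alpha> u) v + r u (S \<beta> v)) + S (\<alpha> * \<beta>) (l (T \<alpha> u) v + r u (T \<beta> v))"
    for u v \<alpha> \<beta>
  proof -
    have "(T \<alpha> u + S \<alpha> u) * (T \<beta> v + S \<beta> v) =
      T \<alpha> u * T \<beta> v + S \<alpha> u * S \<beta> v + (T \<alpha> u * S \<beta> v + S \<alpha> u * T \<beta> v)"
      by (simp add: algebra_simps)
    moreover have "T (\<alpha> * \<beta>) (l (T \<alpha> u + S \<alpha> u) v + r u (T \<beta> v + S \<beta> v)) +
     S (\<alpha> * \<beta>) (l (T \<alpha> u + S \<alpha> u) v + r u (T \<beta> v + S \<beta> v)) =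
      T (\<alpha> * \<beta>) (l (T \<alpha> u) v + r u (T \<beta> v)) + S (\<alpha> * \<beta>) (l (S \<alpha> u) v + r u (S \<beta> v))
      + (T (\<alpha> * \<beta>) (l (S \<alpha> u) v + r u (S \<beta> v)) + S (\<alpha> * \<beta>) (l (T \<alpha> u) v + r u (T \<beta> v)))"
      by (simp add: ladd radd Tadd Sadd algebra_simps)
    ultimately show ?thesis using TSeq[of \<alpha> u \<beta> v] Teq[of \<alpha> u \<beta> v] Seq[of \<alpha> u \<beta> v] by simp
  qed
  have fi: "\<And>\<alpha> y. S \<alpha> (inv (S \<alpha>) y) = y" using bS by (simp add: bij_is_surj surj_f_inv_f)
  have if_: "\<And>\<alpha> x. inv (S \<alpha>) (S \<alpha> x) = x" using bS by (simp add: bij_is_inj)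
  have lin: "Vector_Spaces.linear sA sA (T \<alpha> \<circ> inv (S \<alpha>))" for \<alpha>
    using Vector_Spaces.linear_compose[OF inv_linear_aux[OF linS bS[rule_format]] linT] .
  have nij: "T \<alpha> (inv (S \<alpha>) a) * T \<beta> (inv (S \<beta>) b) =
        T (\<alpha> * \<beta>) (inv (S (\<alpha> * \<beta>)) (T \<alpha> (inv (S \<alpha>) a) * b + a * T \<beta> (inv (S \<beta>) b)
          - T (\<alpha> * \<beta>) (inv (S (\<alpha> * \<beta>)) (a * b))))" for a b \<alpha> \<beta>
  proof -
    obtain u where u: "a = S \<alpha> u" using fi by metis
    obtain v where v: "b = S \<beta> v" using fi by metis
    have "T \<alpha> u * S \<beta> v + S \<alpha> u * T \<beta> v - T (\<alpha> * \<beta>) (inv (S (\<alpha> * \<beta>)) (S \<alpha> u * S \<beta> v))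
        = S (\<alpha> * \<beta>) (l (T \<alpha> u) v + r u (T \<beta> v))"
      unfolding cross Seq if_ by simp
    then show ?thesis unfolding u v if_ Teq by (simp add: if_)
  qed
  show ?thesis unfolding Nijenhuis_family_def using lin nij by simp
qed

theorem proposition2p10:
  fixes sA :: "'k::field_char_0 \<Rightarrow> 'a::ring \<Rightarrow> 'a"
    and sM :: "'k \<Rightarrow> 'm::ab_group_add \<Rightarrow> 'm"
    and l :: "'a \<Rightarrow> 'm \<Rightarrow> 'm" and r :: "'m \<Rightarrow> 'a \<Rightarrow> 'm"
    and T S :: "'w::semigroup_mult \<Rightarrow> 'm \<Rightarrow> 'a"
  assumes "assoc_algebra sA"
    and "bimodule sA sM l r"
    and "compatible_O_operator_families sA sM l r T S"
  shows "((\<forall>\<alpha>. bij (S \<alpha>)) \<longrightarrow> Nijenhuis_family sA (\<lambda>\<alpha>. T \<alpha> \<circ> inv (S \<alpha>)))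
       \<and> ((\<forall>\<alpha>. bij (T \<alpha>)) \<longrightarrow> Nijenhuis_family sA (\<lambda>\<alpha>. S \<alpha> \<circ> inv (T \<alpha>)))"
proof -
  have e: "\<And>c d. (\<lambda>\<alpha> u. sA c (S \<alpha> u) + sA d (T \<alpha> u)) = (\<lambda>\<alpha> u. sA d (T \<alpha> u) + sA c (S \<alpha> u))"
    by (simp add: add.commute)
  have "compatible_O_operator_families sA sM l r S T"
    using assms(3) unfolding compatible_O_operator_families_def e by auto
  then show ?thesis using main_aux[OF assms(2,3)] main_aux[OF assms(2)] by blast
qed

end
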